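(* Let $\{\emptyset,\Omega\}=\mathcal{F}_0\subseteq\cdots\subseteq\mathcal{F}_n$ be $\sigma$-fields on a probability space and let $(\xi_i,\mathcal{F}_i)_{i=1,\dots,n}$ be conditionally symmetric martingale differences (each $\xi_i$ is $\mathcal{F}_i$-measurable, integrable, $\mathbf{E}(\xi_i\mid\mathcal{F}_{i-1})=0$, and $\mathbf{P}(\xi_i>y\mid\mathcal{F}_{i-1})=\mathbf{P}(\xi_i<-y\mid\mathcal{F}_{i-1})$ for all $y\ge0$). Then for all $\lambda,y\ge0$ and each $i$, \[ \mathbf{E}\left(\exp\left\{\lambda\xi_i-\tfrac12(\lambda\xi_i)^2\mathbf{1}_{\{|\xi_i|>y\}}\right\}\,\Big|\,\mathcal{F}_{i-1}\right)\le\exp\left\{\left(\frac{\cosh(\lambda y)-1}{y^2}\right)\mathbf{E}\big(\xi_i^2\mathbf{1}_{\{|\xi_i|\le y\}}\mid\mathcal{F}_{i-1}\big)\right\}, \] where by convention $\frac{\cosh(\lambda y)-1}{y^2}=\frac{\lambda^2}{2}$ when $y=0$. *)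

theory Defs
  imports "HOL-Probability.Probability"
begin

definition cosh_coeff :: "real \<Rightarrow> real \<Rightarrow> real" where
  "cosh_coeff l y = (if y = 0 then l^2 / 2 else (cosh (l * y) - 1) / y^2)"

definition cond_prob_sub :: "'a measure \<Rightarrow> 'a measure \<Rightarrow> 'a set \<Rightarrow> 'a \<Rightarrow> real" where
  "cond_prob_sub M F A = real_cond_exp M F (indicator A)"

end

theory Submission
  imports Defs
begin

definition symE :: "real set set" where
  "symE = {{t<..}|t. t \<ge> 0} \<union> {{..< -t}|t. t \<ge> 0} \<union> {{}, UNIV}"

lemma symE_gen: "sets (borel::real measure) = sigma_sets UNIV symE"
proof -
  have b: "sets (borel::real measure) = sigma_sets UNIV (range greaterThan)"
    by (subst borel_Ioi) simp
  show ?thesis unfolding b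
  proof (rule sigma_sets_eqI)
    fix a assume "a \<in> range (greaterThan :: real \<Rightarrow> real set)"
    then obtain c where a: "a = {c<..}" by auto
    show "a \<in> sigma_sets UNIV symE"
    proof (cases "c \<ge> 0")
      case True then show ?thesis unfolding a symE_def by auto
    next
      case False
      define s where "s = (\<lambda>n::nat. c * (real n + 1) / (real n + 2))"
      have "(\<Inter>n. {..< s n}) = {..c}"
      proof (intro set_eqI iffI)
        fix x assume x: "x \<in> (\<Inter>n. {..< s n})"
        show "x \<in> {..c}"
        proof (rule ccontr)
          assume "x \<notin> {..c}" then have xc: "x > c" by auto
          have l1: "(\<lambda>n. real (Suc n) / real (Suc (Suc n))) \<longlonglongrightarrow> 1"
            using LIMSEQ_Suc[OF LIMSEQ_n_over_Suc_n[where 'a=real]] by simp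
          have "(\<lambda>n. c * (real (Suc n) / real (Suc (Suc n)))) \<longlonglongrightarrow> c * 1"
            by (intro tendsto_mult tendsto_const l1)
          moreover have "(\<lambda>n. c * (real (Suc n) / real (Suc (Suc n)))) = s"
            unfolding s_def by (auto simp: field_simps)
          ultimately have "s \<longlonglongrightarrow> c" by simp
          then have "eventually (\<lambda>n. s n < x) sequentially"
            using xc by (simp add: order_tendsto_iff)
          then obtain n where "s n < x" by (metis eventually_sequentially order_refl)
          with x show False by (metis INT_iff UNIV_I lessThan_iff less_asym)
        qed
      next
        fix x assume "x \<in> {..c}"
        then have xc: "x \<le> c" by auto
        show "x \<in> (\<Inter>n. {..< s n})"
        proof
          fix n :: nat
          have "x * (real n + 2) \<le> c * (real n + 2)" using xc by (intro mult_right_mono) auto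
          then have "x * (real n + 2) < c * (real n + 1)" using False by (simp add: algebra_simps)
          then show "x \<in> {..< s n}" by (simp add: s_def field_simps)
        qed
      qed
      moreover have "(\<Inter>n. {..< s n}) \<in> sigma_sets UNIV symE"
      proof (rule sigma_sets_Inter)
        show "symE \<subseteq> Pow UNIV" by auto
        fix n
        have "s n \<le> 0" using False by (auto simp: s_def divide_nonpos_pos mult_nonpos_nonneg)
        then have "{..< s n} \<in> symE" unfolding symE_def
          by (auto intro!: exI[of _ "- s n"])
        then show "{..< s n} \<in> sigma_sets UNIV symE" by auto
      qed
      ultimately have "{..c} \<in> sigma_sets UNIV symE" by simp
      then have "UNIV - {..c} \<in> sigma_sets UNIV symE" by (rule sigma_sets.Compl)
      moreover have "UNIV - {..c} = a" using a by auto
      ultimately show ?thesis by simp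
    qed
  next
    fix b assume "b \<in> symE"
    then have "b \<in> sets (borel::real measure)" unfolding symE_def by auto
    then show "b \<in> sigma_sets UNIV (range greaterThan)" unfolding b .
  qed
qed

lemma Int_stable_symE: "Int_stable symE"
  unfolding Int_stable_def
proof (intro ballI)
  have g: "\<And>t s::real. {t<..} \<inter> {s<..} = {max t s<..}" by auto
  have l: "\<And>t s::real. {..<-t} \<inter> {..<-s} = {..< -max t s}" by auto
  have m: "\<And>t s::real. 0\<le>t \<Longrightarrow> 0\<le>s \<Longrightarrow> {t<..} \<inter> {..<-s} = {}" by auto
  have m': "\<And>t s::real. 0\<le>t \<Longrightarrow> 0\<le>s \<Longrightarrow> {..<-s} \<inter> {t<..} = {}" by auto
  fix a b assume a: "a \<in> symE" and b: "b \<in> symE"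
  show "a \<inter> b \<in> symE"
    using a b unfolding symE_def
    apply (elim UnE insertE emptyE CollectE exE conjE)
    apply (simp_all only: g l m m' Int_UNIV_left Int_UNIV_right Int_empty_left Int_empty_right)
    apply (auto intro: exI[of _ "max _ _"])
    done
qed

lemma emeasure_distr_restr:
  assumes [measurable]: "h \<in> borel_measurable M" "A \<in> sets M" "B \<in> sets borel"
  shows "emeasure (distr (restrict_space M A) borel h) B = emeasure M (A \<inter> {\<omega> \<in> space M. h \<omega> \<in> B})"
proof -
  have hm: "h \<in> borel_measurable (restrict_space M A)"
    by (rule measurable_restrict_space1) simp
  have "emeasure (distr (restrict_space M A) borel h) B
        = emeasure (restrict_space M A) (h -` B \<inter> space (restrict_space M A))"
    by (rule emeasure_distr[OF hm]) simp
  also have "h -` B \<inter> space (restrict_space M A) = A \<inter> {\<omega> \<in> space M. h \<omega> \<in> B}"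
    using sets.sets_into_space[OF assms(2)] by (auto simp: space_restrict_space)
  also have "emeasure (restrict_space M A) \<dots> = emeasure M (A \<inter> {\<omega> \<in> space M. h \<omega> \<in> B})"
    by (rule emeasure_restrict_space) auto
  finally show ?thesis .
qed

lemma sym_int:
  fixes M :: "'a measure" and X :: "'a \<Rightarrow> real" and g :: "real \<Rightarrow> real"
  assumes fin: "finite_measure M" and X[measurable]: "X \<in> borel_measurable M"
    and A[measurable]: "A \<in> sets M"
    and tails: "\<And>t. t \<ge> 0 \<Longrightarrow> measure M (A \<inter> {\<omega>\<in>space M. X \<omega> > t}) = measure M (A \<inter> {\<omega>\<in>space M. X \<omega> < -t})"
    and g[measurable]: "g \<in> borel_measurable borel"
  shows "(\<integral>\<omega>\<in>A. g (X \<omega>) \<partial>M) = (\<integral>\<omega>\<in>A. g (- X \<omega>) \<partial>M)"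
proof -
  interpret finite_measure M by fact
  define R where "R = restrict_space M A"
  have XR: "X \<in> borel_measurable R" unfolding R_def by (rule measurable_restrict_space1) simp
  have XR': "(\<lambda>\<omega>. - X \<omega>) \<in> borel_measurable R" unfolding R_def by (rule measurable_restrict_space1) simp
  have eqd: "distr R borel X = distr R borel (\<lambda>\<omega>. - X \<omega>)"
  proof (rule measure_eqI_generator_eq[where E=symE and \<Omega>=UNIV and A="\<lambda>_. UNIV"])
    show "Int_stable symE" by (rule Int_stable_symE)
    show "symE \<subseteq> Pow UNIV" by auto
    show "sets (distr R borel X) = sigma_sets UNIV symE" using symE_gen by simp
    show "sets (distr R borel (\<lambda>\<omega>. - X \<omega>)) = sigma_sets UNIV symE" using symE_gen by simp
    show "range (\<lambda>_. UNIV) \<subseteq> symE" by (auto simp: symE_def)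
    show "(\<Union>i. UNIV) = (UNIV :: real set)" by simp
    show "emeasure (distr R borel X) UNIV \<noteq> \<infinity>"
      unfolding R_def by (subst emeasure_distr_restr) (auto simp: emeasure_eq_measure)
    fix B assume "B \<in> symE"
    then have B: "B \<in> sets borel" unfolding symE_def by auto
    have e1: "emeasure (distr R borel X) B = emeasure M (A \<inter> {\<omega> \<in> space M. X \<omega> \<in> B})"
      unfolding R_def by (rule emeasure_distr_restr) (auto simp: B)
    have e2: "emeasure (distr R borel (\<lambda>\<omega>. - X \<omega>)) B = emeasure M (A \<inter> {\<omega> \<in> space M. - X \<omega> \<in> B})"
      unfolding R_def by (rule emeasure_distr_restr) (auto simp: B)
    show "emeasure (distr R borel X) B = emeasure (distr R borel (\<lambda>\<omega>. - X \<omega>)) B"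
      using \<open>B \<in> symE\<close> unfolding symE_def
    proof (elim UnE insertE emptyE CollectE exE conjE)
      fix t :: real assume B: "B = {t<..}" and t: "0 \<le> t"
      have "A \<inter> {\<omega> \<in> space M. X \<omega> \<in> B} = A \<inter> {\<omega>\<in>space M. X \<omega> > t}" using B by auto
      moreover have "A \<inter> {\<omega> \<in> space M. - X \<omega> \<in> B} = A \<inter> {\<omega>\<in>space M. X \<omega> < -t}" using B by auto
      ultimately show ?thesis using tails[OF t] by (simp add: e1 e2 emeasure_eq_measure)
    next
      fix t :: real assume B: "B = {..< -t}" and t: "0 \<le> t"
      have "A \<inter> {\<omega> \<in> space M. X \<omega> \<in> B} = A \<inter> {\<omega>\<in>space M. X \<omega> < -t}" using B by auto
      moreover have "A \<inter> {\<omega> \<in> space M. - X \<omega> \<in> B} = A \<inter> {\<omega>\<in>space M. X \<omega> > t}" using B by auto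
      ultimately show ?thesis using tails[OF t] by (simp add: e1 e2 emeasure_eq_measure)
    qed (unfold e1 e2, auto)
  qed
  have "(\<integral>\<omega>\<in>A. g (X \<omega>) \<partial>M) = integral\<^sup>L R (\<lambda>\<omega>. g (X \<omega>))"
    unfolding R_def set_lebesgue_integral_def by (subst integral_restrict_space) auto
  also have "\<dots> = integral\<^sup>L (distr R borel X) g" by (rule integral_distr[OF XR g, symmetric])
  also have "\<dots> = integral\<^sup>L (distr R borel (\<lambda>\<omega>. - X \<omega>)) g" by (simp add: eqd)
  also have "\<dots> = integral\<^sup>L R (\<lambda>\<omega>. g (- X \<omega>))" by (rule integral_distr[OF XR' g])
  also have "\<dots> = (\<integral>\<omega>\<in>A. g (- X \<omega>) \<partial>M)"
    unfolding R_def set_lebesgue_integral_def by (subst integral_restrict_space) auto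
  finally show ?thesis .
qed

lemma cosh_sums_m1: "(\<lambda>n. if even n \<and> n \<noteq> 0 then z ^ n / fact n else 0) sums (cosh z - 1 :: real)"
proof -
  have "(\<lambda>n. (if even n then z ^ n /\<^sub>R fact n else 0) - (if n = 0 then 1 else 0)) sums (cosh z - 1)"
    by (intro sums_diff cosh_converges) (simp add: sums_single[of 0 "\<lambda>_. 1::real", simplified])
  moreover have "(\<lambda>n. (if even n then z ^ n /\<^sub>R fact n else 0) - (if n = 0 then 1 else 0))
     = (\<lambda>n. if even n \<and> n \<noteq> 0 then z ^ n / fact n else 0)"
    by (auto simp: divide_inverse mult.commute)
  ultimately show ?thesis by simp
qed

lemma cosh_sub1_le:
  fixes x Y :: real
  assumes "\<bar>x\<bar> \<le> Y" "Y > 0"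
  shows "cosh x - 1 \<le> x^2 * ((cosh Y - 1)/Y^2)"
proof -
  let ?c = "x^2 / Y^2"
  have s2: "(\<lambda>n. ?c * (if even n \<and> n \<noteq> 0 then Y ^ n / fact n else 0)) sums (?c * (cosh Y - 1))"
    by (intro sums_mult cosh_sums_m1)
  have "cosh x - 1 \<le> ?c * (cosh Y - 1)"
  proof (rule sums_le[OF _ cosh_sums_m1 s2])
    fix n
    show "(if even n \<and> n \<noteq> 0 then x ^ n / fact n else 0) \<le> ?c * (if even n \<and> n \<noteq> 0 then Y ^ n / fact n else 0)"
    proof (cases "even n \<and> n \<noteq> 0")
      case True
      then obtain m where n: "n = Suc (Suc m)" and em: "even m"
        by (metis dvd_0_right even_Suc not0_implies_Suc)
      have "x ^ n = x^2 * \<bar>x\<bar> ^ m"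
        using em by (simp add: n power2_eq_square power_even_abs)
      also have "\<dots> \<le> x^2 * Y ^ m"
        by (intro mult_left_mono power_mono) (use assms in auto)
      also have "\<dots> = ?c * Y ^ n" using assms by (simp add: n power2_eq_square field_simps)
      finally have "x ^ n \<le> ?c * Y ^ n" .
      then have "x ^ n / fact n \<le> ?c * Y ^ n / fact n" by (intro divide_right_mono) auto
      then show ?thesis using True by simp
    next
      case False
      show ?thesis by (subst (1 2) if_not_P[OF False]) simp
    qed
  qed
  then show ?thesis by (simp add: field_simps)
qed

lemma fact_double_ge: "2 ^ k * fact k \<le> (fact (2 * k) :: real)"
proof (induction k)
  case 0 then show ?case by simp
next
  case (Suc k)
  have "(2::real) ^ Suc k * fact (Suc k) = (2 * (real k + 1)) * (2 ^ k * fact k)"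
    by (simp add: algebra_simps)
  also have "\<dots> \<le> (2 * (real k + 1)) * fact (2 * k)"
    by (intro mult_left_mono Suc.IH) auto
  also have "\<dots> \<le> ((2 * real k + 2) * (2 * real k + 1)) * fact (2 * k)"
    by (intro mult_right_mono) auto
  also have "\<dots> = fact (2 * Suc k)"
    by (simp add: algebra_simps)
  finally show ?case .
qed

lemma cosh_le_exp_sq: "cosh (a::real) \<le> exp (a^2 / 2)"
proof -
  have c: "(\<lambda>k. a ^ (2*k) / fact (2*k)) sums cosh a"
  proof -
    have "(\<lambda>k. (\<lambda>n. if even n then a ^ n /\<^sub>R fact n else 0) (2*k)) sums cosh a"
      by (subst sums_mono_reindex) (auto simp: strict_mono_def intro: cosh_converges)
    then show ?thesis by (simp only: real_scaleR_def divide_inverse_commute even_mult_iff even_numeral simp_thms if_True)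
  qed
  have e: "(\<lambda>k. (a^2/2) ^ k / fact k) sums exp (a^2/2)"
    using exp_converges[of "a^2/2"] by (simp only: real_scaleR_def divide_inverse_commute)
  show ?thesis
  proof (rule sums_le[OF _ c e])
    fix k
    have "a ^ (2*k) / fact (2*k) \<le> a ^ (2*k) / (2^k * fact k)"
      by (intro divide_left_mono fact_double_ge) (auto simp: power_mult)
    also have "\<dots> = (a^2/2) ^ k / fact k" by (simp add: power_mult power_divide)
    finally show "a ^ (2*k) / fact (2*k) \<le> (a^2/2) ^ k / fact k" .
  qed
qed

lemma cosh_real_eq: "cosh (z::real) = (exp z + exp (- z)) / 2"
  by (simp add: cosh_field_def)

lemma pointwise_bound:
  fixes l y x :: real assumes l: "0 \<le> l" and y: "0 \<le> y"
  shows "(exp (l*x - 1/2*(l*x)^2 * (if \<bar>x\<bar>>y then 1 else 0))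
          + exp (l*(-x) - 1/2*(l*(-x))^2*(if \<bar>-x\<bar>>y then 1 else 0))) / 2
         \<le> 1 + cosh_coeff l y * (x^2 * (if \<bar>x\<bar> \<le> y then 1 else 0))"
proof (cases "\<bar>x\<bar> > y")
  case True
  have "(exp (l*x - 1/2*(l*x)^2) + exp (l*(-x) - 1/2*(l*(-x))^2)) / 2
        = exp (- ((l*x)^2/2)) * cosh (l*x)"
  proof -
    have e1: "exp (l*x - 1/2*(l*x)^2) = exp (- ((l*x)^2/2)) * exp (l*x)"
      by (simp only: exp_add[symmetric]) (rule arg_cong[where f=exp], simp add: algebra_simps)
    have e2: "exp (l*(-x) - 1/2*(l*(-x))^2) = exp (- ((l*x)^2/2)) * exp (- (l*x))"
      by (simp only: exp_add[symmetric]) (rule arg_cong[where f=exp], simp add: algebra_simps)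
    show ?thesis unfolding e1 e2 cosh_real_eq by (simp add: algebra_simps)
  qed
  also have "\<dots> \<le> exp (- ((l*x)^2/2)) * exp ((l*x)^2/2)"
    by (intro mult_left_mono cosh_le_exp_sq) auto
  also have "\<dots> = 1" by (simp add: exp_minus field_simps)
  finally show ?thesis using True by simp
next
  case False
  then have xy: "\<bar>x\<bar> \<le> y" by simp
  have lhs: "(exp (l*x - 1/2*(l*x)^2 * (if \<bar>x\<bar>>y then 1 else 0))
          + exp (l*(-x) - 1/2*(l*(-x))^2*(if \<bar>-x\<bar>>y then 1 else 0))) / 2 = cosh (l*x)"
    using False by (simp add: cosh_real_eq)
  show ?thesis
  proof (cases "y = 0 \<or> l = 0")
    case True
    then have "l * x = 0" using xy by auto
    then have ch: "cosh (l * x) = 1" by simp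
    moreover have "0 \<le> cosh_coeff l y" using True by (auto simp: cosh_coeff_def)
    moreover have "0 \<le> x^2" by simp
    ultimately show ?thesis unfolding lhs ch using xy by (simp add: mult_nonneg_nonneg)
  next
    case False
    then have yp: "y > 0" and lp: "l > 0" using y l by auto
    have "\<bar>l*x\<bar> \<le> l*y" using xy lp by (simp add: abs_mult)
    from cosh_sub1_le[OF this] have "cosh (l*x) - 1 \<le> (l*x)^2 * ((cosh (l*y) - 1)/(l*y)^2)"
      using yp lp by simp
    also have "\<dots> = x^2 * ((cosh (l*y) - 1)/y^2)" using lp yp by (simp add: field_simps power_mult_distrib)
    finally have "cosh (l*x) \<le> 1 + cosh_coeff l y * x^2" using yp by (simp add: cosh_coeff_def mult.commute)
    then show ?thesis unfolding lhs using xy by simp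
  qed
qed


theorem lemma6p1:
  fixes M :: "'a measure" and F :: "nat \<Rightarrow> 'a measure" and n :: nat
    and l :: real and y :: real and i :: nat and \<xi> :: "nat \<Rightarrow> 'a \<Rightarrow> real"
  assumes "prob_space M"
    and subalg: "\<And>i. i \<le> n \<Longrightarrow> subalgebra M (F i)"
    and F0: "sets (F 0) = {{}, space M}"
    and mono: "\<And>i j. i \<le> j \<Longrightarrow> j \<le> n \<Longrightarrow> sets (F i) \<subseteq> sets (F j)"
    and meas: "\<And>i. 1 \<le> i \<Longrightarrow> i \<le> n \<Longrightarrow> \<xi> i \<in> borel_measurable (F i)"
    and integ: "\<And>i. 1 \<le> i \<Longrightarrow> i \<le> n \<Longrightarrow> integrable M (\<xi> i)"
    and mart: "\<And>i. 1 \<le> i \<Longrightarrow> i \<le> n \<Longrightarrow>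
                 AE x in M. real_cond_exp M (F (i - 1)) (\<xi> i) x = 0"
    and symm: "\<And>i y. 1 \<le> i \<Longrightarrow> i \<le> n \<Longrightarrow> 0 \<le> y \<Longrightarrow>
                 AE x in M. cond_prob_sub M (F (i - 1)) {\<omega> \<in> space M. \<xi> i \<omega> > y} x
                          = cond_prob_sub M (F (i - 1)) {\<omega> \<in> space M. \<xi> i \<omega> < - y} x"
    and i: "1 \<le> i" "i \<le> n"
    and lam: "0 \<le> l" and y: "0 \<le> y"
  shows "AE x in M.
           real_cond_exp M (F (i - 1))
             (\<lambda>\<omega>. exp (l * \<xi> i \<omega> - (1/2) * (l * \<xi> i \<omega>)^2
                          * indicator {\<omega>' \<in> space M. \<bar>\<xi> i \<omega>'\<bar> > y} \<omega>)) x
         \<le> exp (cosh_coeff l y *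
                 real_cond_exp M (F (i - 1))
                   (\<lambda>\<omega>. (\<xi> i \<omega>)^2 * indicator {\<omega>' \<in> space M. \<bar>\<xi> i \<omega>'\<bar> \<le> y} \<omega>) x)"
proof -
  interpret P: prob_space M by fact
  define G where "G = F (i - 1)"
  define X where "X = \<xi> i"
  have subG: "subalgebra M G" unfolding G_def using subalg i by simp
  interpret S: finite_measure_subalgebra M G
    by unfold_locales (rule subG)
  have XG: "X \<in> borel_measurable (F i)" unfolding X_def using meas i by simp
  have Xm[measurable]: "X \<in> borel_measurable M" using measurable_from_subalg[OF subalg[OF i(2)] XG] .
  define f0 where "f0 = (\<lambda>x::real. exp (l*x - 1/2*(l*x)^2 * (if \<bar>x\<bar>>y then 1 else 0)))"
  define q where "q = (\<lambda>x::real. x^2 * (if \<bar>x\<bar> \<le> y then 1 else 0))"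
  define c where "c = cosh_coeff l y"
  have f0m[measurable]: "f0 \<in> borel_measurable borel" unfolding f0_def by measurable
  have qm[measurable]: "q \<in> borel_measurable borel" unfolding q_def by measurable
  have f0b: "\<bar>f0 x\<bar> \<le> exp (l*y) + exp (1/2)" for x
  proof (cases "\<bar>x\<bar> > y")
    case True
    have "l*x - 1/2*(l*x)^2 \<le> 1/2"
      using sum_power2_ge_zero[of "l*x - 1" 0] by (simp add: power2_eq_square algebra_simps)
    moreover have "f0 x = exp (l*x - 1/2*(l*x)^2)" using True unfolding f0_def by simp
    ultimately have "f0 x \<le> exp (1/2)" by simp
    moreover have "0 \<le> exp (l*y)" by simp
    moreover have p: "0 < f0 x" unfolding f0_def by simp
    ultimately show ?thesis using abs_of_pos[OF p] exp_gt_zero[of "l*y"] exp_gt_zero[of "1/2::real"] by linarith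
  next
    case False
    then have "l*x \<le> l*y" using lam by (intro mult_left_mono) auto
    moreover have "f0 x = exp (l*x)" using False unfolding f0_def by simp
    ultimately have "f0 x \<le> exp (l*y)" by simp
    moreover have "0 \<le> exp (1/2::real)" by simp
    moreover have p: "0 < f0 x" unfolding f0_def by simp
    ultimately show ?thesis using abs_of_pos[OF p] exp_gt_zero[of "l*y"] exp_gt_zero[of "1/2::real"] by linarith
  qed
  have qb: "\<bar>q x\<bar> \<le> y^2" for x
  proof (cases "\<bar>x\<bar> \<le> y")
    case True
    have "\<bar>x\<bar>^2 \<le> y^2" by (rule power_mono[OF True abs_ge_zero])
    then show ?thesis using True unfolding q_def by simp
  next
    case False
    then show ?thesis unfolding q_def by simp
  qed
  have int_f0X: "integrable M (\<lambda>\<omega>. f0 (X \<omega>))"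
    by (rule P.integrable_const_bound[where B="exp (l*y) + exp (1/2)"]) (auto simp: f0b)
  have int_f0mX: "integrable M (\<lambda>\<omega>. f0 (- X \<omega>))"
    by (rule P.integrable_const_bound[where B="exp (l*y) + exp (1/2)"]) (auto simp: f0b)
  have int_qX: "integrable M (\<lambda>\<omega>. q (X \<omega>))"
    by (rule P.integrable_const_bound[where B="y^2"]) (auto simp: qb)
  have tails: "measure M (A \<inter> {\<omega>\<in>space M. X \<omega> > t}) = measure M (A \<inter> {\<omega>\<in>space M. X \<omega> < -t})"
    if A: "A \<in> sets G" and t: "0 \<le> t" for A t
  proof -
    have AM[measurable]: "A \<in> sets M" using A subG by (auto simp: subalgebra_def)
    have key: "measure M (A \<inter> S) = (\<integral>\<omega>\<in>A. cond_prob_sub M G S \<omega> \<partial>M)" if SM[measurable]: "S \<in> sets M" for S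
    proof -
      have intS: "integrable M (indicator S :: 'a \<Rightarrow> real)"
        by (rule integrable_real_indicator[OF SM]) (simp add: less_top[symmetric] P.emeasure_finite)
      have ii: "(\<lambda>\<omega>. indicator A \<omega> *\<^sub>R indicator S \<omega>) = (indicator (A \<inter> S) :: 'a \<Rightarrow> real)"
        by (rule ext) (simp only: indicator_inter_arith real_scaleR_def)
      have sp: "A \<inter> S \<inter> space M = A \<inter> S" using sets.sets_into_space[OF SM] by blast
      have "measure M (A \<inter> S) = (\<integral>\<omega>\<in>A. indicator S \<omega> \<partial>M)"
        unfolding set_lebesgue_integral_def ii by (simp add: sp)
      also have "\<dots> = (\<integral>\<omega>\<in>A. real_cond_exp M G (indicator S) \<omega> \<partial>M)"
        by (rule S.real_cond_exp_intA[OF intS A])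
      finally show ?thesis unfolding cond_prob_sub_def .
    qed
    have cpm: "cond_prob_sub M G S \<in> borel_measurable M" for S
      unfolding cond_prob_sub_def by (rule borel_measurable_cond_exp2)
    have im: "(\<lambda>x. indicator A x *\<^sub>R cond_prob_sub M G S x) \<in> borel_measurable M" for S
      by (rule borel_measurable_scaleR[OF borel_measurable_indicator[OF AM] cpm])
    have S1: "{\<omega> \<in> space M. X \<omega> > t} \<in> sets M" by measurable
    have S2: "{\<omega> \<in> space M. X \<omega> < - t} \<in> sets M" by measurable
    have ae: "AE x in M. cond_prob_sub M G {\<omega> \<in> space M. X \<omega> > t} x
                          = cond_prob_sub M G {\<omega> \<in> space M. X \<omega> < - t} x"
      using symm[OF i t] unfolding G_def X_def .
    have "(\<integral>\<omega>\<in>A. cond_prob_sub M G {\<omega> \<in> space M. X \<omega> > t} \<omega> \<partial>M)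
        = (\<integral>\<omega>\<in>A. cond_prob_sub M G {\<omega> \<in> space M. X \<omega> < - t} \<omega> \<partial>M)"
      unfolding set_lebesgue_integral_def
    proof (rule integral_cong_AE)
      show "AE x in M. indicator A x *\<^sub>R cond_prob_sub M G {\<omega> \<in> space M. X \<omega> > t} x
          = indicator A x *\<^sub>R cond_prob_sub M G {\<omega> \<in> space M. X \<omega> < - t} x"
        by (rule AE_mp[OF ae], rule AE_I2) simp
    qed (rule im)+
    then show ?thesis using key[OF S1] key[OF S2] by linarith
  qed
  define sf where "sf = (\<lambda>\<omega>. exp (l * \<xi> i \<omega> - (1/2) * (l * \<xi> i \<omega>)^2
                          * indicator {\<omega>' \<in> space M. \<bar>\<xi> i \<omega>'\<bar> > y} \<omega>))"
  define sq where "sq = (\<lambda>\<omega>. (\<xi> i \<omega>)^2 * indicator {\<omega>' \<in> space M. \<bar>\<xi> i \<omega>'\<bar> \<le> y} \<omega>)"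
  have xim[measurable]: "\<xi> i \<in> borel_measurable M" using Xm unfolding X_def .
  have sfm[measurable]: "sf \<in> borel_measurable M" unfolding sf_def by measurable
  have sqm[measurable]: "sq \<in> borel_measurable M" unfolding sq_def by measurable
  have ae1: "AE x in M. real_cond_exp M G sf x = real_cond_exp M G (\<lambda>\<omega>. f0 (X \<omega>)) x"
  proof (rule S.real_cond_exp_cong)
    show "AE x in M. sf x = f0 (X x)"
      by (rule AE_I2) (simp add: sf_def f0_def X_def indicator_def)
  qed (simp_all)
  have ae6: "AE x in M. real_cond_exp M G (\<lambda>\<omega>. q (X \<omega>)) x = real_cond_exp M G sq x"
  proof (rule S.real_cond_exp_cong)
    show "AE x in M. q (X x) = sq x"
      by (rule AE_I2) (simp add: sq_def q_def X_def indicator_def)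
  qed (simp_all)
  have ae2: "AE x in M. real_cond_exp M G (\<lambda>\<omega>. f0 (X \<omega>)) x
               = real_cond_exp M G (\<lambda>\<omega>. f0 (- X \<omega>)) x"
  proof (rule S.real_cond_exp_charact)
    fix A assume A: "A \<in> sets G"
    have AM: "A \<in> sets M" using A subG by (auto simp: subalgebra_def)
    have "(\<integral>\<omega>\<in>A. f0 (X \<omega>) \<partial>M) = (\<integral>\<omega>\<in>A. f0 (- X \<omega>) \<partial>M)"
      by (rule sym_int[OF P.finite_measure_axioms Xm AM tails[OF A] f0m])
    also have "\<dots> = (\<integral>\<omega>\<in>A. real_cond_exp M G (\<lambda>\<omega>. f0 (- X \<omega>)) \<omega> \<partial>M)"
      by (rule S.real_cond_exp_intA[OF int_f0mX A])
    finally show "(\<integral>\<omega>\<in>A. f0 (X \<omega>) \<partial>M) = (\<integral>\<omega>\<in>A. real_cond_exp M G (\<lambda>\<omega>. f0 (- X \<omega>)) \<omega> \<partial>M)" .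
  next
    show "integrable M (\<lambda>\<omega>. f0 (X \<omega>))" by (rule int_f0X)
    show "integrable M (real_cond_exp M G (\<lambda>\<omega>. f0 (- X \<omega>)))" by (rule S.real_cond_exp_int(1)[OF int_f0mX])
    show "real_cond_exp M G (\<lambda>\<omega>. f0 (- X \<omega>)) \<in> borel_measurable G" by (rule borel_measurable_cond_exp)
  qed
  have int_h: "integrable M (\<lambda>\<omega>. f0 (X \<omega>) + f0 (- X \<omega>))"
    by (rule Bochner_Integration.integrable_add[OF int_f0X int_f0mX])
  have ae3: "AE x in M. real_cond_exp M G (\<lambda>\<omega>. (f0 (X \<omega>) + f0 (- X \<omega>)) / 2) x
               = real_cond_exp M G (\<lambda>\<omega>. f0 (X \<omega>) + f0 (- X \<omega>)) x / 2"
    by (rule S.real_cond_exp_cdiv[OF int_h])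
  have ae4: "AE x in M. real_cond_exp M G (\<lambda>\<omega>. f0 (X \<omega>) + f0 (- X \<omega>)) x
               = real_cond_exp M G (\<lambda>\<omega>. f0 (X \<omega>)) x + real_cond_exp M G (\<lambda>\<omega>. f0 (- X \<omega>)) x"
    by (rule S.real_cond_exp_add[OF int_f0X int_f0mX])
  have int_cq: "integrable M (\<lambda>\<omega>. c * q (X \<omega>))"
    by (rule integrable_mult_right[OF int_qX])
  have int_1: "integrable M (\<lambda>\<omega>. 1::real)" by simp
  have int_1cq: "integrable M (\<lambda>\<omega>. 1 + c * q (X \<omega>))"
    by (rule Bochner_Integration.integrable_add[OF int_1 int_cq])
  have ae5: "AE x in M. real_cond_exp M G (\<lambda>\<omega>. (f0 (X \<omega>) + f0 (- X \<omega>)) / 2) x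
               \<le> real_cond_exp M G (\<lambda>\<omega>. 1 + c * q (X \<omega>)) x"
  proof (rule S.real_cond_exp_mono)
    show "AE x in M. (f0 (X x) + f0 (- X x)) / 2 \<le> 1 + c * q (X x)"
      by (rule AE_I2) (use pointwise_bound[OF lam y, of "X _"] in \<open>simp add: f0_def q_def c_def\<close>)
    show "integrable M (\<lambda>\<omega>. (f0 (X \<omega>) + f0 (- X \<omega>)) / 2)"
      by (rule integrable_divide[OF int_h])
  qed (rule int_1cq)
  have ae7: "AE x in M. real_cond_exp M G (\<lambda>\<omega>. 1 + c * q (X \<omega>)) x
               = real_cond_exp M G (\<lambda>\<omega>. 1) x + real_cond_exp M G (\<lambda>\<omega>. c * q (X \<omega>)) x"
    by (rule S.real_cond_exp_add[OF int_1 int_cq])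
  have ae8: "AE x in M. real_cond_exp M G (\<lambda>\<omega>. 1) x = 1"
    by (rule S.real_cond_exp_F_meas[OF int_1]) simp
  have ae9: "AE x in M. real_cond_exp M G (\<lambda>\<omega>. c * q (X \<omega>)) x = c * real_cond_exp M G (\<lambda>\<omega>. q (X \<omega>)) x"
    by (rule S.real_cond_exp_cmult[OF int_qX])
  have "AE x in M. real_cond_exp M G sf x \<le> exp (c * real_cond_exp M G sq x)"
    using ae1 ae2 ae3 ae4 ae5 ae6 ae7 ae8 ae9
  proof eventually_elim
    case (elim x)
    have "real_cond_exp M G sf x \<le> 1 + c * real_cond_exp M G sq x"
      using elim by simp
    also have "\<dots> \<le> exp (c * real_cond_exp M G sq x)" by (rule exp_ge_add_one_self)
    finally show ?case .
  qed
  then show ?thesis unfolding sf_def sq_def c_def G_def .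
qed

end
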